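(* Let $\mathcal{F}_1,\dots,\mathcal{F}_k$ be finite nonempty families of convex sets in $\mathbb{R}^d$ with $n_i=|\mathcal{F}_i|$, let $b\in\mathbb{R}^d$, let $\alpha\in(0,1]$ and $\beta=1-(1-\alpha)^{1/k}$. Assume that for at least an $\alpha$ fraction of the $\prod_{i=1}^k n_i$ transversals $\mathcal{T}$ of $\mathcal{F}_1,\dots,\mathcal{F}_k$, the set $K(\mathcal{T})$ has a point in $B(b,1)$. Then there exist $q\in\mathbb{R}^d$ and $i\in[k]$ such that at least $\beta n_i$ elements of $\mathcal{F}_i$ intersect the ball $B(q,1/\sqrt k)$.
   Context: A transversal of $\mathcal{F}_1,\dots,\mathcal{F}_k$ is $\mathcal{T}=(K_1,\dots,K_k)$ with $K_i\in\mathcal{F}_i$ for all $i$, and $K(\mathcal{T})=\bigcap_{i=1}^kK_i$. $B(p,\rho)$ is the closed Euclidean ball of centre $p$ and radius $\rho$. *)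

theory Defs
  imports "HOL-Analysis.Analysis"
begin

text \<open>Families are indexed: family i (for i < k) is F i 0, ..., F i (n i - 1),
  so repeated members are allowed. A transversal is a choice function
  t with t i < n i for all i < k; its member sets are F i (t i).\<close>

definition transversals :: "nat \<Rightarrow> (nat \<Rightarrow> nat) \<Rightarrow> (nat \<Rightarrow> nat) set" where
  "transversals k n = (\<Pi>\<^sub>E i\<in>{..<k}. {..<n i})"

definition Ktr :: "nat \<Rightarrow> (nat \<Rightarrow> nat \<Rightarrow> 'a set) \<Rightarrow> (nat \<Rightarrow> nat) \<Rightarrow> 'a set" where
  "Ktr k F t = (\<Inter>i\<in>{..<k}. F i (t i))"

end

theory Submission
  imports Defs
begin

lemma obtuse_closest:
  fixes S :: "'a::euclidean_space set"
  assumes "convex S" "closed S" "z \<in> S"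
  shows "(dist a z)^2 \<ge> (dist a (closest_point S a))^2 + (dist (closest_point S a) z)^2"
proof -
  let ?p = "closest_point S a"
  have ne: "S \<noteq> {}" using assms by auto
  have p: "?p \<in> S" "\<forall>y\<in>S. dist a ?p \<le> dist a y" using closest_point_exists[OF assms(2) ne] by auto
  have ip: "inner (a - ?p) (z - ?p) \<le> 0"
    by (rule any_closest_point_dot[OF assms(1,2) p(1) assms(3) p(2)])
  have e: "a - z = (a - ?p) - (z - ?p)" by simp
  have "(norm (a - z))^2 = (norm (a - ?p))^2 + (norm (z - ?p))^2 - 2 * inner (a - ?p) (z - ?p)"
    unfolding e power2_norm_eq_inner by (simp add: inner_diff inner_commute algebra_simps)
  thus ?thesis using ip by (simp add: dist_norm norm_minus_commute)
qed

primrec yseq :: "(nat \<Rightarrow> nat \<Rightarrow> 'a::euclidean_space set) \<Rightarrow> 'a \<Rightarrow> (nat \<Rightarrow> nat) \<Rightarrow> nat \<Rightarrow> 'a" where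
  "yseq F b t 0 = b"
| "yseq F b t (Suc i) = closest_point (closure (F i (t i))) (yseq F b t i)"

lemma yseq_cong: "(\<forall>j<i. t j = t' j) \<Longrightarrow> yseq F b t i = yseq F b t' i"
  by (induction i) auto

lemma count_lemma:
  fixes P :: "(nat \<Rightarrow> nat) \<Rightarrow> nat \<Rightarrow> bool" and a :: "nat \<Rightarrow> real"
  assumes cong: "\<And>t t' i. (\<forall>j\<le>i. t j = t' j) \<Longrightarrow> P t i = P t' i"
    and apos: "\<And>i. 0 \<le> a i"
    and abound: "\<And>t i. i < m \<Longrightarrow> a i \<le> real (card {j. j < n i \<and> P (t(i:=j)) i})"
  shows "(\<Prod>i<m. a i) \<le> real (card {t \<in> (\<Pi>\<^sub>E i\<in>{..<m}. {..<n i}). \<forall>i<m. P t i})"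
  using abound
proof (induction m)
  case 0
  have "{t \<in> (\<Pi>\<^sub>E i\<in>{..<0::nat}. {..<n i}). \<forall>i<0. P t i} = {\<lambda>_. undefined}" by auto
  then show ?case by simp
next
  case (Suc m)
  define S where "S = {t \<in> (\<Pi>\<^sub>E i\<in>{..<m}. {..<n i}). \<forall>i<m. P t i}"
  define S' where "S' = {t \<in> (\<Pi>\<^sub>E i\<in>{..<Suc m}. {..<n i}). \<forall>i<Suc m. P t i}"
  define J where "J = (\<lambda>s. {j. j < n m \<and> P (s(m:=j)) m})"
  have IH: "(\<Prod>i<m. a i) \<le> real (card S)" unfolding S_def using Suc by auto
  have finS: "finite S" unfolding S_def by (auto intro!: finite_PiE)
  have finS': "finite S'" unfolding S'_def by (auto intro!: finite_PiE)
  have finJ: "\<And>s. finite (J s)" unfolding J_def by auto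
  have sub: "(\<lambda>(s,j). s(m:=j)) ` (SIGMA s:S. J s) \<subseteq> S'"
  proof safe
    fix s j assume s: "s \<in> S" and j: "j \<in> J s"
    have "\<forall>i<m. P (s(m:=j)) i = P s i" by (intro allI impI cong) auto
    then show "s(m:=j) \<in> S'" using s j unfolding S_def S'_def J_def
      by (auto simp: PiE_iff less_Suc_eq extensional_def)
  qed
  have inj: "inj_on (\<lambda>(s,j). s(m:=j)) (SIGMA s:S. J s)"
  proof (rule inj_onI, clarsimp)
    fix s j s' j' assume s: "s \<in> S" "s' \<in> S" and eq: "s(m:=j) = s'(m:=j')"
    have "s m = undefined" "s' m = undefined" using s unfolding S_def by (auto simp: PiE_iff extensional_def)
    moreover have "j = j'" using fun_cong[OF eq, of m] by simp
    ultimately show "s = s' \<and> j = j'" using eq by (metis fun_upd_triv fun_upd_upd)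
  qed
  have "card (SIGMA s:S. J s) = (\<Sum>s\<in>S. card (J s))"
    using finS finJ by (simp add: card_SigmaI)
  hence "real (card (SIGMA s:S. J s)) = (\<Sum>s\<in>S. real (card (J s)))" by simp
  also have "\<dots> \<ge> (\<Sum>s\<in>S. a m)"
  proof (rule sum_mono)
    fix s show "a m \<le> real (card (J s))" unfolding J_def by (rule Suc.prems[of m s]) simp
  qed
  finally have "real (card S) * a m \<le> real (card (SIGMA s:S. J s))" by (simp add: mult.commute)
  also have "card (SIGMA s:S. J s) = card ((\<lambda>(s,j). s(m:=j)) ` (SIGMA s:S. J s))"
    using card_image[OF inj] by simp
  also have "\<dots> \<le> card S'" using card_mono[OF finS' sub] by simp
  finally have A: "real (card S) * a m \<le> real (card S')" by simp
  have "(\<Prod>i<Suc m. a i) = (\<Prod>i<m. a i) * a m" by simp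
  also have "\<dots> \<le> real (card S) * a m" using IH apos by (simp add: mult_right_mono)
  finally show ?case using A unfolding S'_def by simp
qed


lemma geo:
  fixes F :: "nat \<Rightarrow> nat \<Rightarrow> 'a::euclidean_space set"
  assumes k: "k \<ge> 1" and cv: "\<forall>i<k. convex (F i (t i))"
    and x: "x \<in> Ktr k F t" and bx: "dist b x \<le> 1"
  shows "\<exists>i<k. F i (t i) \<inter> cball (yseq F b t i) (1 / sqrt (real k)) \<noteq> {}"
proof (rule ccontr)
  assume H: "\<not> ?thesis"
  define r where "r = 1 / sqrt (real k)"
  let ?y = "yseq F b t"
  have rpos: "r > 0" using k by (simp add: r_def)
  have r2: "r^2 = 1 / real k" using k by (simp add: r_def power_divide)
  have xin: "\<And>i. i < k \<Longrightarrow> x \<in> F i (t i)" using x by (auto simp: Ktr_def)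
  have far: "\<And>i. i < k \<Longrightarrow> dist (?y i) x > r"
  proof -
    fix i assume i: "i < k"
    have e: "F i (t i) \<inter> cball (?y i) r = {}" using H i unfolding r_def by auto
    have "x \<notin> cball (?y i) r" using e xin[OF i] by blast
    thus "dist (?y i) x > r" by (simp add: mem_cball)
  qed
  have dummy: True by simp
  have step: "\<And>i. i < k \<Longrightarrow> dist (?y i) (?y (Suc i)) \<ge> r"
  proof (rule ccontr)
    fix i assume i: "i < k" and lt: "\<not> dist (?y i) (?y (Suc i)) \<ge> r"
    let ?C = "closure (F i (t i))"
    have ne: "?C \<noteq> {}" using xin[OF i] closure_subset by blast
    have yin: "?y (Suc i) \<in> ?C" using closest_point_in_set[OF closed_closure ne] by simp
    have ep: "r - dist (?y i) (?y (Suc i)) > 0" using lt by simp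
    obtain z where z: "z \<in> F i (t i)" "dist z (?y (Suc i)) < r - dist (?y i) (?y (Suc i))"
      using yin ep unfolding closure_approachable by blast
    have "dist (?y i) z \<le> dist (?y i) (?y (Suc i)) + dist z (?y (Suc i))"
      by (metis dist_commute dist_triangle)
    hence "z \<in> cball (?y i) r" using z by (simp add: mem_cball)
    moreover have "F i (t i) \<inter> cball (?y i) r = {}" using H i unfolding r_def by auto
    ultimately show False using z by blast
  qed
  have ind: "m \<le> k - 1 \<Longrightarrow> (dist b x)^2 \<ge> real m * r^2 + (dist (?y m) x)^2" for m
  proof (induction m)
    case 0 thus ?case by simp
  next
    case (Suc m)
    hence m: "m < k" by simp
    have ob: "(dist (?y m) x)^2 \<ge> (dist (?y m) (?y (Suc m)))^2 + (dist (?y (Suc m)) x)^2"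
    proof -
      have "x \<in> closure (F m (t m))" using xin[OF m] closure_subset by blast
      moreover have "convex (F m (t m))" using cv m by simp
      ultimately show ?thesis using obtuse_closest[OF convex_closure closed_closure, of "F m (t m)" x "?y m"]
        by simp
    qed
    have "r^2 \<le> (dist (?y m) (?y (Suc m)))^2" using step[OF m] rpos by (simp add: power_mono)
    thus ?case using Suc ob by (simp add: algebra_simps)
  qed
  have A: "(dist b x)^2 \<ge> real (k - 1) * r^2 + (dist (?y (k-1)) x)^2" using ind by simp
  have B: "(dist (?y (k-1)) x)^2 > r^2" using far[of "k-1"] k rpos
    by (simp add: power_strict_mono)
  have C: "(dist b x)^2 \<le> 1" using bx by (simp add: power_le_one)
  have "real (k - 1) * r^2 + r^2 = 1" using k r2 by (simp add: of_nat_diff field_simps)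
  thus False using A B C by linarith
qed

theorem theorem4p3:
  fixes F :: "nat \<Rightarrow> nat \<Rightarrow> 'a::euclidean_space set"
    and n :: "nat \<Rightarrow> nat" and k :: nat and b :: 'a and \<alpha> \<beta> :: real
  assumes k: "k \<ge> 1"
    and nonempty: "\<forall>i<k. n i \<ge> 1"
    and convex: "\<forall>i<k. \<forall>j<n i. convex (F i j)"
    and alpha: "0 < \<alpha>" "\<alpha> \<le> 1"
    and beta: "\<beta> = 1 - (1 - \<alpha>) powr (1 / real k)"
    and frac: "real (card {t \<in> transversals k n. Ktr k F t \<inter> cball b 1 \<noteq> {}})
                 \<ge> \<alpha> * (\<Prod>i<k. real (n i))"
  shows "\<exists>q i. i < k \<and>
           real (card {j. j < n i \<and> F i j \<inter> cball q (1 / sqrt (real k)) \<noteq> {}})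
             \<ge> \<beta> * real (n i)"
proof (rule ccontr)
  assume "\<not> ?thesis"
  hence H: "\<And>q i. i < k \<Longrightarrow>
      real (card {j. j < n i \<and> F i j \<inter> cball q (1 / sqrt (real k)) \<noteq> {}}) < \<beta> * real (n i)"
    using not_le by blast
  define r where "r = 1 / sqrt (real k)"
  define \<gamma> where "\<gamma> = (1 - \<alpha>) powr (1 / real k)"
  have g0: "0 \<le> \<gamma>" unfolding \<gamma>_def by simp
  have g1: "\<gamma> \<le> 1" unfolding \<gamma>_def using alpha by (intro powr_le1) auto
  have gk: "\<gamma> ^ k = 1 - \<alpha>"
  proof (cases "\<alpha> = 1")
    case True thus ?thesis using k by (simp add: \<gamma>_def)
  next
    case False
    hence "1 - \<alpha> \<noteq> 0" by simp
    hence "\<gamma> ^ k = (1 - \<alpha>) powr (real k * (1 / real k))" unfolding \<gamma>_def by (rule powr_power)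
    also have "\<dots> = 1 - \<alpha>" using k alpha by simp
    finally show ?thesis .
  qed
  have bg: "\<beta> = 1 - \<gamma>" using beta \<gamma>_def by simp
  define P where "P = (\<lambda>t i. F i (t i) \<inter> cball (yseq F b t i) r = {})"
  define a where "a = (\<lambda>i. real (n i) - of_int \<lceil>\<beta> * real (n i)\<rceil> + 1)"
  have ceil_le: "of_int \<lceil>\<beta> * real (n i)\<rceil> \<le> real (n i)" for i
  proof -
    have "0 \<le> \<gamma> * real (n i)" using g0 by simp
    hence "\<beta> * real (n i) \<le> real (n i)" by (simp add: bg algebra_simps)
    hence "\<lceil>\<beta> * real (n i)\<rceil> \<le> int (n i)" by (simp add: ceiling_le_iff)
    thus ?thesis by linarith
  qed
  have apos: "\<And>i. 0 \<le> a i" using ceil_le unfolding a_def by (smt (verit))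
  have cong: "\<And>t t' i. (\<forall>j\<le>i. t j = t' j) \<Longrightarrow> P t i = P t' i"
  proof -
    fix t t' :: "nat \<Rightarrow> nat" and i assume h: "\<forall>j\<le>i. t j = t' j"
    have "yseq F b t i = yseq F b t' i" using h by (intro yseq_cong) auto
    thus "P t i = P t' i" using h unfolding P_def by auto
  qed
  have abound: "\<And>t i. i < k \<Longrightarrow> a i \<le> real (card {j. j < n i \<and> P (t(i:=j)) i})"
  proof -
    fix t :: "nat \<Rightarrow> nat" and i assume i: "i < k"
    define q where "q = yseq F b t i"
    have yq: "\<And>j. yseq F b (t(i:=j)) i = q" unfolding q_def by (intro yseq_cong) auto
    define M where "M = {j. j < n i \<and> F i j \<inter> cball q r \<noteq> {}}"
    have eq: "{j. j < n i \<and> P (t(i:=j)) i} = {..<n i} - M"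
      unfolding P_def M_def yq by auto
    have Msub: "M \<subseteq> {..<n i}" unfolding M_def by auto
    have cM: "card {j. j < n i \<and> P (t(i:=j)) i} = n i - card M"
      unfolding eq using Msub by (simp add: card_Diff_subset finite_subset)
    have cMle: "card M \<le> n i" using card_mono[OF _ Msub] by simp
    have "real (card M) < \<beta> * real (n i)" using H[OF i, of q] unfolding M_def r_def .
    hence "int (card M) < \<lceil>\<beta> * real (n i)\<rceil>" by (simp add: less_ceiling_iff)
    hence "real (card M) \<le> of_int \<lceil>\<beta> * real (n i)\<rceil> - 1" by linarith
    thus "a i \<le> real (card {j. j < n i \<and> P (t(i:=j)) i})"
      unfolding cM a_def using cMle by (simp add: of_nat_diff)
  qed
  define S where "S = {t \<in> transversals k n. \<forall>i<k. P t i}"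
  have cS: "(\<Prod>i<k. a i) \<le> real (card S)"
    unfolding S_def transversals_def by (rule count_lemma[OF cong apos abound])
  have strict: "(\<Prod>i<k. \<gamma> * real (n i)) < (\<Prod>i<k. a i)"
  proof (rule prod_mono_strict[of 0])
    have lt: "\<gamma> * real (n i) < a i" for i
      using ceiling_correct[of "\<beta> * real (n i)"] unfolding a_def bg by (simp add: algebra_simps)
    show "0 \<in> {..<k}" using k by simp
    show "\<gamma> * real (n 0) < a 0" by (rule lt)
    show "finite {..<k}" by simp
    show "\<And>i. i \<in> {..<k} \<Longrightarrow> 0 \<le> \<gamma> * real (n i) \<and> \<gamma> * real (n i) \<le> a i"
      using lt g0 less_imp_le by auto
    show "\<And>i. i \<in> {..<k} \<Longrightarrow> 0 < a i" using lt g0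
      by (meson le_less_trans mult_nonneg_nonneg of_nat_0_le_iff)
  qed
  have pe: "(\<Prod>i<k. \<gamma> * real (n i)) = (1 - \<alpha>) * (\<Prod>i<k. real (n i))"
    by (simp add: prod.distrib gk)
  define G where "G = {t \<in> transversals k n. Ktr k F t \<inter> cball b 1 \<noteq> {}}"
  have finT: "finite (transversals k n)" unfolding transversals_def by (auto intro!: finite_PiE)
  have cT: "card (transversals k n) = (\<Prod>i<k. n i)" unfolding transversals_def
    by (simp add: card_PiE)
  have GS: "G \<subseteq> transversals k n - S"
  proof
    fix t assume t: "t \<in> G"
    then obtain x where x: "x \<in> Ktr k F t" "x \<in> cball b 1" unfolding G_def by auto
    have tt: "t \<in> transversals k n" using t G_def by auto
    hence "\<forall>i<k. t i < n i" unfolding transversals_def by auto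
    hence cv: "\<forall>i<k. convex (F i (t i))" using convex by auto
    have "\<exists>i<k. \<not> P t i" using geo[OF k cv x(1)] x(2) unfolding P_def r_def by (auto simp: mem_cball)
    thus "t \<in> transversals k n - S" using tt unfolding S_def by auto
  qed
  have SsubT: "S \<subseteq> transversals k n" unfolding S_def by auto
  have "card G \<le> card (transversals k n - S)" using card_mono[OF _ GS] finT by simp
  also have "\<dots> = card (transversals k n) - card S"
    using SsubT finT by (simp add: card_Diff_subset finite_subset)
  finally have "real (card G) \<le> real (card (transversals k n)) - real (card S)"
    using card_mono[OF finT SsubT] by (simp add: of_nat_diff)
  also have "\<dots> = (\<Prod>i<k. real (n i)) - real (card S)" using cT by simp
  finally have "real (card G) < \<alpha> * (\<Prod>i<k. real (n i))"
    using cS strict pe by (simp add: algebra_simps)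
  thus False using frac unfolding G_def by simp
qed

end
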